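(* Let $\alpha\in(0,\tfrac12)$, $K>0$, $N\in\mathbb N$, and consider initial phases $\theta^N_{1,0},\dots,\theta^N_{N,0}$ and natural frequencies $\Omega^N_1,\dots,\Omega^N_N$. Let $\Theta^N(t)=(\theta^N_1(t),\dots,\theta^N_N(t))$ be the unique global-in-time classical solution of $\dot\theta_i=\Omega^N_i+\frac KN\sum_{j=1}^Nh(\theta_j-\theta_i)$, $\theta_i(0)=\theta^N_{i,0}$, and let $\mu^N_t=\frac1N\sum_{i=1}^N\delta_{e^{i\theta^N_i(t)}}(z)\otimes\delta_{\Omega^N_i}(\Omega)$. Then $\mu^N\in\mathcal{AC}_{\mathcal M}\cap\mathcal T_{\mathcal M}$ is a weak measure-valued solution of $\partial_t f+\mathrm{div}_{(z,\Omega)}(\mathcal V[f]f)=0$ with initial datum $\mu^N_0$, and $$\Big|\frac{d}{dt}\int_{\mathbb T\times\mathbb R}\varphi\,d\mu^N_t\Big|\le\Big(\frac1N\sum_{i=1}^N|\Omega^N_i|+K\|h\|_{C(\mathbb T)}\Big)\|\nabla\varphi\|_{C_0(\mathbb T\times\mathbb R)}$$ for every $t\ge0$ and every $\varphi\in C^1_0(\mathbb T\times\mathbb R)$.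
   Context: $\mathbb T$ is the unit circle identified with $(-\pi,\pi]$ via $z=e^{i\theta}$; $|\theta|_o$ = absolute value of the representative of $\theta$ mod $2\pi$ in $(-\pi,\pi]$. Kernel $h(\theta)=\sin\theta/|\theta|_o^{2\alpha}$ ($\theta\notin2\pi\mathbb Z$), $h=0$ on $2\pi\mathbb Z$; $\|h\|_{C(\mathbb T)}$ is its sup norm. $\mathcal P[\mu](\theta,\Omega)=\Omega-K\int h(\theta-\theta')\,d\mu(\theta',\Omega')$, $\mathcal V[\mu](z,\Omega)=(\mathcal P[\mu](z,\Omega)\,iz,0)$. $\mathcal{AC}_{\mathcal M}$: bounded measure-valued $t\mapsto\mu_t$ with $t\mapsto\int\varphi\,d\mu_t$ absolutely continuous for $\varphi\in C_c^\infty(\mathbb T\times\mathbb R)$; $\mathcal T_{\mathcal M}$: uniformly tight families. A weak measure-valued solution is a weak-* continuous bounded $f$ with $\int_0^T\!\int\partial_t\varphi\,df_t\,dt+\int_0^T\!\int\langle\mathcal V[f_t],\nabla_{(z,\Omega)}\varphi\rangle\,df_t\,dt=-\int\varphi(0,\cdot)\,df_0$ for all $\varphi\in C^1_c([0,T)\times\mathbb T\times\mathbb R)$. $C^1_0$ denotes $C^1$ functions which, together with their gradient, vanish at infinity; $\|\nabla\varphi\|_{C_0}$ is the sup norm of the Riemannian gradient. *)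

theory Defs
  imports "HOL-Analysis.Analysis"
begin

(* Angle coordinates: the circle T is identified with (-pi,pi] via z = exp(i theta).
   A point of T x R is represented by (theta, Omega) :: real * real.  Measures on T x R
   are Borel measures on real * real concentrated on (-pi,pi] x R; functions on T x R
   are functions on real * real that are 2pi-periodic in theta. *)

definition ang_rep :: "real \<Rightarrow> real" where
  "ang_rep \<theta> = \<theta> - 2 * pi * of_int \<lceil>(\<theta> - pi) / (2 * pi)\<rceil>"

definition ang_abs :: "real \<Rightarrow> real" where
  "ang_abs \<theta> = \<bar>ang_rep \<theta>\<bar>"

definition hker :: "real \<Rightarrow> real \<Rightarrow> real" where
  "hker \<alpha> \<theta> = (if ang_rep \<theta> = 0 then 0 else sin \<theta> / (ang_abs \<theta> powr (2 * \<alpha>)))"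

definition hnorm :: "real \<Rightarrow> real" where
  "hnorm \<alpha> = (SUP \<theta>. \<bar>hker \<alpha> \<theta>\<bar>)"

definition torus_set :: "(real \<times> real) set" where
  "torus_set = {-pi<..pi} \<times> UNIV"

definition periodic_fn :: "(real \<times> real \<Rightarrow> real) \<Rightarrow> bool" where
  "periodic_fn \<phi> \<longleftrightarrow> (\<forall>\<theta> \<Omega>. \<phi> (\<theta> + 2 * pi, \<Omega>) = \<phi> (\<theta>, \<Omega>))"

definition C1_with :: "(real \<times> real \<Rightarrow> real) \<Rightarrow> (real \<times> real \<Rightarrow> real) \<Rightarrow> (real \<times> real \<Rightarrow> real) \<Rightarrow> bool" where
  "C1_with \<phi> \<phi>\<theta> \<phi>\<Omega> \<longleftrightarrow>
     (\<forall>x. (\<phi> has_derivative (\<lambda>(a, b). \<phi>\<theta> x * a + \<phi>\<Omega> x * b)) (at x)) \<and>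
     continuous_on UNIV \<phi>\<theta> \<and> continuous_on UNIV \<phi>\<Omega>"

(* C^infinity functions of two real variables *)
coinductive smooth2 :: "(real \<times> real \<Rightarrow> real) \<Rightarrow> bool" where
  "(\<And>x. (\<phi> has_derivative (\<lambda>(a, b). \<phi>\<theta> x * a + \<phi>\<Omega> x * b)) (at x))
    \<Longrightarrow> smooth2 \<phi>\<theta> \<Longrightarrow> smooth2 \<phi>\<Omega> \<Longrightarrow> smooth2 \<phi>"

definition Cc_inf :: "(real \<times> real \<Rightarrow> real) \<Rightarrow> bool" where
  "Cc_inf \<phi> \<longleftrightarrow> smooth2 \<phi> \<and> periodic_fn \<phi> \<and>
     (\<exists>R. \<forall>\<theta> \<Omega>. \<bar>\<Omega>\<bar> \<ge> R \<longrightarrow> \<phi> (\<theta>, \<Omega>) = 0)"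

definition vanish_inf :: "(real \<times> real \<Rightarrow> real) \<Rightarrow> bool" where
  "vanish_inf \<phi> \<longleftrightarrow> (\<forall>\<epsilon>>0. \<exists>R. \<forall>\<theta> \<Omega>. \<bar>\<Omega>\<bar> \<ge> R \<longrightarrow> \<bar>\<phi> (\<theta>, \<Omega>)\<bar> \<le> \<epsilon>)"

definition C0_fn :: "(real \<times> real \<Rightarrow> real) \<Rightarrow> bool" where
  "C0_fn \<phi> \<longleftrightarrow> continuous_on UNIV \<phi> \<and> periodic_fn \<phi> \<and> vanish_inf \<phi>"

(* C^1_0(T x R), with its partial derivatives (the Riemannian gradient in angle coordinates
   is (phi_theta, phi_Omega), since |iz| = 1) *)
definition C10_with :: "(real \<times> real \<Rightarrow> real) \<Rightarrow> (real \<times> real \<Rightarrow> real) \<Rightarrow> (real \<times> real \<Rightarrow> real) \<Rightarrow> bool" where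
  "C10_with \<phi> \<phi>\<theta> \<phi>\<Omega> \<longleftrightarrow> C1_with \<phi> \<phi>\<theta> \<phi>\<Omega> \<and> periodic_fn \<phi> \<and>
     vanish_inf \<phi> \<and> vanish_inf \<phi>\<theta> \<and> vanish_inf \<phi>\<Omega>"

definition grad_norm :: "(real \<times> real \<Rightarrow> real) \<Rightarrow> (real \<times> real \<Rightarrow> real) \<Rightarrow> real" where
  "grad_norm \<phi>\<theta> \<phi>\<Omega> = (SUP x. sqrt ((\<phi>\<theta> x)\<^sup>2 + (\<phi>\<Omega> x)\<^sup>2))"

definition bounded_mvalued :: "(real \<Rightarrow> (real \<times> real) measure) \<Rightarrow> bool" where
  "bounded_mvalued \<mu> \<longleftrightarrow>
     (\<forall>t\<ge>0. sets (\<mu> t) = sets borel \<and> finite_measure (\<mu> t) \<and>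
              emeasure (\<mu> t) (UNIV - torus_set) = 0) \<and>
     (\<exists>M. \<forall>t\<ge>0. measure (\<mu> t) UNIV \<le> M)"

definition abs_cont_on :: "real \<Rightarrow> real \<Rightarrow> (real \<Rightarrow> real) \<Rightarrow> bool" where
  "abs_cont_on a b F \<longleftrightarrow>
     (\<forall>\<epsilon>>0. \<exists>\<delta>>0. \<forall>(n::nat) s u.
        (\<forall>k<n. a \<le> s k \<and> s k \<le> u k \<and> u k \<le> b) \<and>
        (\<forall>k<n. \<forall>l<n. k \<noteq> l \<longrightarrow> u k \<le> s l \<or> u l \<le> s k) \<and>
        (\<Sum>k<n. u k - s k) < \<delta> \<longrightarrow> (\<Sum>k<n. \<bar>F (u k) - F (s k)\<bar>) < \<epsilon>)"

definition AC_M :: "(real \<Rightarrow> (real \<times> real) measure) \<Rightarrow> bool" where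
  "AC_M \<mu> \<longleftrightarrow> bounded_mvalued \<mu> \<and>
     (\<forall>\<phi>. Cc_inf \<phi> \<longrightarrow> (\<forall>T\<ge>0. abs_cont_on 0 T (\<lambda>t. \<integral>x. \<phi> x \<partial>\<mu> t)))"

definition T_M :: "(real \<Rightarrow> (real \<times> real) measure) \<Rightarrow> bool" where
  "T_M \<mu> \<longleftrightarrow> (\<forall>\<epsilon>>0. \<exists>C. compact C \<and> (\<forall>t\<ge>0. measure (\<mu> t) (UNIV - C) \<le> \<epsilon>))"

definition Pfield :: "real \<Rightarrow> real \<Rightarrow> (real \<times> real) measure \<Rightarrow> real \<times> real \<Rightarrow> real" where
  "Pfield \<alpha> K m x = snd x - K * (\<integral>y. hker \<alpha> (fst x - fst y) \<partial>m)"

definition test_fn :: "real \<Rightarrow> (real \<Rightarrow> real \<times> real \<Rightarrow> real) \<Rightarrow> (real \<Rightarrow> real \<times> real \<Rightarrow> real)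
     \<Rightarrow> (real \<Rightarrow> real \<times> real \<Rightarrow> real) \<Rightarrow> (real \<Rightarrow> real \<times> real \<Rightarrow> real) \<Rightarrow> bool" where
  "test_fn T \<phi> \<phi>t \<phi>\<theta> \<phi>\<Omega> \<longleftrightarrow>
     (\<forall>t\<ge>0. \<forall>x. ((\<lambda>(s, y). \<phi> s y) has_derivative
        (\<lambda>(c, a, b). \<phi>t t x * c + \<phi>\<theta> t x * a + \<phi>\<Omega> t x * b)) (at (t, x) within {0..} \<times> UNIV)) \<and>
     continuous_on ({0..} \<times> UNIV) (\<lambda>(t, x). \<phi>t t x) \<and>
     continuous_on ({0..} \<times> UNIV) (\<lambda>(t, x). \<phi>\<theta> t x) \<and>
     continuous_on ({0..} \<times> UNIV) (\<lambda>(t, x). \<phi>\<Omega> t x) \<and>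
     (\<forall>t \<theta> \<Omega>. \<phi> t (\<theta> + 2 * pi, \<Omega>) = \<phi> t (\<theta>, \<Omega>)) \<and>
     (\<exists>T' R. T' < T \<and> (\<forall>t \<theta> \<Omega>. t \<ge> T' \<or> \<bar>\<Omega>\<bar> \<ge> R \<longrightarrow> \<phi> t (\<theta>, \<Omega>) = 0))"

definition weak_sol :: "real \<Rightarrow> real \<Rightarrow> real \<Rightarrow> (real \<Rightarrow> (real \<times> real) measure)
     \<Rightarrow> (real \<times> real) measure \<Rightarrow> bool" where
  "weak_sol \<alpha> K T f f0 \<longleftrightarrow>
     bounded_mvalued f \<and>
     (\<forall>\<phi>. C0_fn \<phi> \<longrightarrow> continuous_on {0..T} (\<lambda>t. \<integral>x. \<phi> x \<partial>f t)) \<and>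
     (\<forall>\<phi> \<phi>t \<phi>\<theta> \<phi>\<Omega>. test_fn T \<phi> \<phi>t \<phi>\<theta> \<phi>\<Omega> \<longrightarrow>
        (LINT t:{0..T}|lborel. \<integral>x. \<phi>t t x \<partial>f t)
        + (LINT t:{0..T}|lborel. \<integral>x. Pfield \<alpha> K (f t) x * \<phi>\<theta> t x \<partial>f t)
        = - (\<integral>x. \<phi> 0 x \<partial>f0))"

definition empirical :: "nat \<Rightarrow> (nat \<Rightarrow> real) \<Rightarrow> (nat \<Rightarrow> real) \<Rightarrow> (real \<times> real) measure" where
  "empirical N \<theta> \<Omega> = distr (uniform_count_measure {..<N}) borel (\<lambda>i. (ang_rep (\<theta> i), \<Omega> i))"

end

theory Submission
  imports Defs
begin


lemma ang_rep_meas: "ang_rep \<in> borel_measurable borel"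
  unfolding ang_rep_def by measurable
lemma hker_meas: "hker \<alpha> \<in> borel_measurable borel"
  unfolding hker_def ang_abs_def using ang_rep_meas by measurable

lemma ang_rep_range: "-pi < ang_rep t \<and> ang_rep t \<le> pi"
proof -
  define c where "c = \<lceil>(t - pi) / (2 * pi)\<rceil>"
  have a: "of_int c - 1 < (t - pi) / (2*pi)" "(t - pi) / (2*pi) \<le> of_int c" unfolding c_def
    by linarith+
  have "ang_rep t = t - 2*pi*c" unfolding ang_rep_def c_def by simp
  with a show ?thesis using pi_gt_zero by (auto simp: field_simps)
qed

lemma ang_rep_ex: "\<exists>k::int. t = ang_rep t + 2*pi*k"
  unfolding ang_rep_def by (intro exI[of _ "\<lceil>(t - pi) / (2 * pi)\<rceil>"]) simp

lemma ang_rep_unique: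
  assumes "-pi < r" "r \<le> pi" "t = r + 2*pi* of_int k"
  shows "ang_rep t = r"
proof -
  have "(t - pi) / (2*pi) = of_int k + (r - pi)/(2*pi)" using assms(3) by (simp add: field_simps)
  moreover have "\<lceil>(r - pi)/(2*pi)\<rceil> = 0"
    using assms(1,2) pi_gt_zero by (simp add: ceiling_eq_iff field_simps)
  ultimately have "\<lceil>(t - pi) / (2*pi)\<rceil> = k" by (simp add: add.commute[of "real_of_int k"])
  then show ?thesis unfolding ang_rep_def using assms(3) by simp
qed

lemma ang_rep_shift: "ang_rep (t + 2*pi* of_int k) = ang_rep t"
proof -
  obtain m where m: "t = ang_rep t + 2*pi* of_int m" using ang_rep_ex by blast
  show ?thesis
    by (rule ang_rep_unique[of _ _ "m+k"]) (use ang_rep_range m in \<open>auto simp: algebra_simps\<close>)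
qed

lemma periodic_nat:
  assumes "\<forall>\<theta> \<Omega>. f (\<theta> + 2 * pi, \<Omega>) = f (\<theta>, \<Omega>)"
  shows "f (\<theta> + 2*pi*real n, \<Omega>) = f (\<theta>, \<Omega>)"
proof (induction n arbitrary: \<theta>)
  case 0 then show ?case by simp
next
  case (Suc n)
  have "\<theta> + 2*pi*real (Suc n) = (\<theta> + 2*pi*real n) + 2*pi" by (simp add: algebra_simps)
  then have "f (\<theta> + 2*pi*real (Suc n), \<Omega>) = f ((\<theta> + 2*pi*real n) + 2*pi, \<Omega>)" by (simp only:)
  also have "\<dots> = f (\<theta> + 2*pi*real n, \<Omega>)" by (rule assms[rule_format])
  finally show ?case using Suc by simp
qed

lemma periodic_int:
  assumes "\<forall>\<theta> \<Omega>. f (\<theta> + 2 * pi, \<Omega>) = f (\<theta>, \<Omega>)"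
  shows "f (\<theta> + 2*pi* of_int k, \<Omega>) = f (\<theta>, \<Omega>)"
proof (cases "k \<ge> 0")
  case True
  then have "of_int k = real (nat k)" by simp
  then show ?thesis using periodic_nat[OF assms, of \<theta> "nat k" \<Omega>] by (simp only:)
next
  case False
  then have k: "real_of_int k + real (nat (-k)) = 0" by simp
  have e: "f (\<theta> + 2*pi* of_int k + 2*pi*real (nat (-k)), \<Omega>) = f (\<theta> + 2*pi* of_int k, \<Omega>)"
    by (rule periodic_nat[OF assms])
  have "\<theta> + 2*pi* of_int k + 2*pi*real (nat (-k)) = \<theta> + 2*pi*(real_of_int k + real (nat (-k)))"
    by (simp only: distrib_left add.assoc)
  then have "\<theta> + 2*pi* of_int k + 2*pi*real (nat (-k)) = \<theta>" unfolding k by simp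
  then show ?thesis using e by (simp only:)
qed

lemma periodic_ang_rep:
  assumes "\<forall>\<theta> \<Omega>. f (\<theta> + 2 * pi, \<Omega>) = f (\<theta>, \<Omega>)"
  shows "f (ang_rep \<theta>, \<Omega>) = f (\<theta>, \<Omega>)"
proof -
  obtain m where m: "\<theta> = ang_rep \<theta> + 2*pi* of_int m" using ang_rep_ex by blast
  show ?thesis using periodic_int[OF assms, of "ang_rep \<theta>" m \<Omega>] m[symmetric] by simp
qed

lemma hker_shift: "hker \<alpha> (t + 2*pi* of_int k) = hker \<alpha> t"
proof -
  have "sin (t + 2*pi* of_int k) = sin t"
    by (simp add: sin_add)
  then show ?thesis unfolding hker_def ang_abs_def ang_rep_shift by simp
qed

lemma hker_reps: "hker \<alpha> (ang_rep a - ang_rep b) = hker \<alpha> (a - b)"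
proof -
  obtain m where m: "a = ang_rep a + 2*pi* of_int m" using ang_rep_ex by blast
  obtain n where n: "b = ang_rep b + 2*pi* of_int n" using ang_rep_ex by blast
  have "a - b = (ang_rep a - ang_rep b) + 2*pi* of_int (m - n)"
    by (subst m, subst n) (simp add: algebra_simps)
  then show ?thesis using hker_shift by metis
qed

lemma sin_ang_rep: "sin (ang_rep t) = sin t"
proof -
  obtain m where m: "t = ang_rep t + 2*pi* of_int m" using ang_rep_ex by blast
  have "sin (ang_rep t + 2*pi* of_int m) = sin (ang_rep t)" by (simp add: sin_add)
  then show ?thesis using m[symmetric] by simp
qed

lemma hker_odd: "hker \<alpha> (- t) = - hker \<alpha> t"
proof -
  obtain m where m: "t = ang_rep t + 2*pi* of_int m" using ang_rep_ex by blast
  have r: "-pi < ang_rep t" "ang_rep t \<le> pi" using ang_rep_range by auto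
  show ?thesis
  proof (cases "ang_rep t = pi")
    case True
    then have s: "sin t = 0" using sin_ang_rep[of t] by simp
    then have "sin (-t) = 0" by simp
    then show ?thesis using s unfolding hker_def by simp
  next
    case False
    have "ang_rep (-t) = - ang_rep t"
      by (rule ang_rep_unique[of _ _ "-m"]) (use r False m in \<open>auto simp: algebra_simps\<close>)
    then show ?thesis unfolding hker_def ang_abs_def by simp
  qed
qed

lemma hker_bound:
  assumes "0 < \<alpha>" "\<alpha> < 1/2"
  shows "\<bar>hker \<alpha> t\<bar> \<le> 1"
proof (cases "ang_rep t = 0")
  case True then show ?thesis unfolding hker_def by simp
next
  case False
  define a where "a = \<bar>ang_rep t\<bar>"
  have apos: "a > 0" using False a_def by simp
  have sa: "\<bar>sin t\<bar> \<le> a" unfolding a_def using sin_ang_rep[of t] abs_sin_x_le_abs_x[of "ang_rep t"] by simp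
  have h: "\<bar>hker \<alpha> t\<bar> = \<bar>sin t\<bar> / a powr (2*\<alpha>)"
    unfolding hker_def ang_abs_def a_def[symmetric] using False by simp
  have pp: "a powr (2*\<alpha>) > 0" using apos by simp
  show ?thesis
  proof (cases "a \<ge> 1")
    case True
    then have "a powr (2*\<alpha>) \<ge> 1" using assms by (simp add: ge_one_powr_ge_zero)
    then have "\<bar>sin t\<bar> \<le> a powr (2*\<alpha>)" using abs_sin_le_one[of t] by linarith
    then show ?thesis unfolding h using pp by (simp add: divide_le_eq)
  next
    case False
    then have "a powr (2*\<alpha>) \<ge> a powr 1" using assms apos
      by (intro powr_mono') auto
    then have "a powr (2*\<alpha>) \<ge> a" using apos by simp
    then show ?thesis unfolding h using pp sa by (simp add: divide_le_eq)
  qed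
qed

lemma hnorm_ge:
  assumes "0 < \<alpha>" "\<alpha> < 1/2"
  shows "\<bar>hker \<alpha> t\<bar> \<le> hnorm \<alpha>"
  unfolding hnorm_def
  by (rule cSUP_upper) (use hker_bound[OF assms] in \<open>auto intro!: bdd_aboveI2\<close>)

lemma integral_empirical:
  assumes "0 < N" "f \<in> borel_measurable borel"
  shows "(\<integral>x. f x \<partial>empirical N th Om) = (\<Sum>i<N. f (ang_rep (th i), Om i)) / real N"
  unfolding empirical_def
  by (subst integral_distr) (use assms in \<open>auto simp: integral_uniform_count_measure\<close>)

lemma emp_sets: "sets (empirical N th Om) = sets borel" and emp_space: "space (empirical N th Om) = UNIV"
  unfolding empirical_def by simp_all

lemma emp_emeasure:
  assumes "A \<in> sets borel"
  shows "emeasure (empirical N th Om) A = card {i\<in>{..<N}. (ang_rep (th i), Om i) \<in> A} / card {..<N}"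
proof -
  have "emeasure (empirical N th Om) A = emeasure (uniform_count_measure {..<N}) ((\<lambda>i. (ang_rep (th i), Om i)) -` A \<inter> {..<N})"
    unfolding empirical_def using assms
    by (subst emeasure_distr) (auto simp: space_uniform_count_measure sets_uniform_count_measure)
  also have "\<dots> = card {i\<in>{..<N}. (ang_rep (th i), Om i) \<in> A} / card {..<N}"
    by (subst emeasure_uniform_count_measure) (auto intro!: arg_cong[where f=card])
  finally show ?thesis .
qed

lemma emp_UNIV: "0 < N \<Longrightarrow> emeasure (empirical N th Om) UNIV = 1"
  by (subst emp_emeasure) (auto simp: divide_ennreal[symmetric] ennreal_of_nat_eq_real_of_nat)

lemma emp_finite: "0 < N \<Longrightarrow> finite_measure (empirical N th Om)"
  by (rule finite_measureI) (simp add: emp_space emp_UNIV)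

lemma emp_measure_UNIV: "0 < N \<Longrightarrow> measure (empirical N th Om) UNIV = 1"
  unfolding measure_def using emp_UNIV by simp

lemma emp_null:
  assumes "A \<in> sets borel" "\<And>i. i < N \<Longrightarrow> (ang_rep (th i), Om i) \<notin> A"
  shows "emeasure (empirical N th Om) A = 0"
  using assms by (subst emp_emeasure) auto

lemma emp_null_measure:
  assumes "A \<in> sets borel" "\<And>i. i < N \<Longrightarrow> (ang_rep (th i), Om i) \<notin> A"
  shows "measure (empirical N th Om) A = 0"
  unfolding measure_def using emp_null[OF assms] by simp

lemma emp_bounded: "0 < N \<Longrightarrow> bounded_mvalued (\<lambda>t. empirical N (Th t) Om)"
proof -
  assume N: "0 < N"
  have tor: "UNIV - torus_set \<in> sets borel"
  proof -
    have "torus_set \<in> sets borel" unfolding torus_set_def by (intro borel_Times) auto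
    then show ?thesis by (metis sets.compl_sets space_borel)
  qed
  show ?thesis unfolding bounded_mvalued_def
    using N tor ang_rep_range
    by (auto simp: emp_sets emp_finite emp_measure_UNIV torus_set_def intro!: emp_null exI[of _ 1])
qed

lemma partial_1:
  assumes "(F has_derivative (\<lambda>(a,b). A*a + B*b)) (at (\<theta>,\<Omega>))"
  shows "((\<lambda>u. F (u,\<Omega>)) has_real_derivative A) (at \<theta>)"
proof -
  have d: "((\<lambda>u. (u,\<Omega>)) has_derivative (\<lambda>a. (a,0))) (at \<theta>)"
    by (auto intro!: derivative_eq_intros)
  have "((F \<circ> (\<lambda>u. (u,\<Omega>))) has_derivative ((\<lambda>(a,b). A*a + B*b) \<circ> (\<lambda>a. (a,0)))) (at \<theta>)"
    by (rule diff_chain_at[OF d]) (use assms in simp)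
  moreover have "((\<lambda>(a,b). A*a + B*b) \<circ> (\<lambda>a. (a,0::real))) = (*) A" by (auto simp: fun_eq_iff)
  ultimately show ?thesis by (simp add: has_field_derivative_def o_def)
qed

lemma partial_2:
  assumes "(F has_derivative (\<lambda>(a,b). A*a + B*b)) (at (\<theta>,\<Omega>))"
  shows "((\<lambda>v. F (\<theta>,v)) has_real_derivative B) (at \<Omega>)"
proof -
  have d: "((\<lambda>v. (\<theta>,v)) has_derivative (\<lambda>b. (0,b))) (at \<Omega>)"
    by (auto intro!: derivative_eq_intros)
  have "((F \<circ> (\<lambda>v. (\<theta>,v))) has_derivative ((\<lambda>(a,b). A*a + B*b) \<circ> (\<lambda>b. (0,b)))) (at \<Omega>)"
    by (rule diff_chain_at[OF d]) (use assms in simp)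
  moreover have "((\<lambda>(a,b). A*a + B*b) \<circ> (\<lambda>b. (0::real,b))) = (*) B" by (auto simp: fun_eq_iff)
  ultimately show ?thesis by (simp add: has_field_derivative_def o_def)
qed

lemma periodic_partials:
  assumes d: "\<And>x. (F has_derivative (\<lambda>(a,b). P x*a + Q x*b)) (at x)" and p: "periodic_fn F"
  shows "periodic_fn P \<and> periodic_fn Q"
  unfolding periodic_fn_def
proof (intro conjI allI)
  fix \<theta> \<Omega> :: real
  have eq1: "(\<lambda>u. F (u + 2*pi, \<Omega>)) = (\<lambda>u. F (u, \<Omega>))"
    using p unfolding periodic_fn_def by auto
  have a: "((\<lambda>u. F (u,\<Omega>)) has_real_derivative P (\<theta>,\<Omega>)) (at \<theta>)" by (rule partial_1[OF d])
  have "((\<lambda>u. F (u,\<Omega>)) has_real_derivative P (\<theta> + 2*pi,\<Omega>)) (at (\<theta> + 2*pi))" by (rule partial_1[OF d])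
  then have "((\<lambda>u. F (u + 2*pi,\<Omega>)) has_real_derivative P (\<theta> + 2*pi,\<Omega>)) (at \<theta>)"
    by (simp add: DERIV_shift)
  then have "((\<lambda>u. F (u,\<Omega>)) has_real_derivative P (\<theta> + 2*pi,\<Omega>)) (at \<theta>)" using eq1 by simp
  then show "P (\<theta> + 2*pi, \<Omega>) = P (\<theta>, \<Omega>)" using a DERIV_unique by blast
  have eq2: "(\<lambda>v. F (\<theta> + 2*pi, v)) = (\<lambda>v. F (\<theta>, v))"
    using p unfolding periodic_fn_def by auto
  have b: "((\<lambda>v. F (\<theta>,v)) has_real_derivative Q (\<theta>,\<Omega>)) (at \<Omega>)" by (rule partial_2[OF d])
  have "((\<lambda>v. F (\<theta> + 2*pi,v)) has_real_derivative Q (\<theta> + 2*pi,\<Omega>)) (at \<Omega>)" by (rule partial_2[OF d])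
  then have "((\<lambda>v. F (\<theta>,v)) has_real_derivative Q (\<theta> + 2*pi,\<Omega>)) (at \<Omega>)" using eq2 by simp
  then show "Q (\<theta> + 2*pi, \<Omega>) = Q (\<theta>, \<Omega>)" using b DERIV_unique by blast
qed

lemma bounded_periodic:
  assumes c: "continuous_on UNIV q" and p: "periodic_fn q" and v: "vanish_inf q"
  shows "\<exists>B. \<forall>x. \<bar>q x\<bar> \<le> B"
proof -
  obtain R where R: "\<And>\<theta> \<Omega>. \<bar>\<Omega>\<bar> \<ge> R \<Longrightarrow> \<bar>q (\<theta>, \<Omega>)\<bar> \<le> 1"
    using v unfolding vanish_inf_def by (meson zero_less_one)
  have "compact ({-pi..pi} \<times> {-R..R})" by (intro compact_Times) auto
  then have "compact (q ` ({-pi..pi} \<times> {-R..R}))"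
    using compact_continuous_image continuous_on_subset[OF c subset_UNIV] by blast
  then obtain B where B: "\<And>y. y \<in> q ` ({-pi..pi} \<times> {-R..R}) \<Longrightarrow> norm y \<le> B"
    using compact_imp_bounded bounded_iff by metis
  show ?thesis
  proof (intro exI[of _ "max B 1"] allI)
    fix x :: "real \<times> real"
    obtain \<theta> \<Omega> where x: "x = (\<theta>, \<Omega>)" by (cases x)
    show "\<bar>q x\<bar> \<le> max B 1"
    proof (cases "\<bar>\<Omega>\<bar> \<ge> R")
      case True then have "\<bar>q (\<theta>, \<Omega>)\<bar> \<le> 1" by (rule R)
      then show ?thesis unfolding x by linarith
    next
      case False
      have "q x = q (ang_rep \<theta>, \<Omega>)" unfolding x
        by (rule periodic_ang_rep[symmetric]) (use p in \<open>simp add: periodic_fn_def\<close>)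
      moreover have "(ang_rep \<theta>, \<Omega>) \<in> {-pi..pi} \<times> {-R..R}"
        using False ang_rep_range[of \<theta>] by auto
      ultimately show ?thesis using B by fastforce
    qed
  qed
qed

lemma grad_bound:
  assumes "C10_with \<phi> \<phi>\<theta> \<phi>\<Omega>"
  shows "\<bar>\<phi>\<theta> x\<bar> \<le> grad_norm \<phi>\<theta> \<phi>\<Omega>"
proof -
  have d: "\<And>x. (\<phi> has_derivative (\<lambda>(a,b). \<phi>\<theta> x*a + \<phi>\<Omega> x*b)) (at x)"
    and c1: "continuous_on UNIV \<phi>\<theta>" and c2: "continuous_on UNIV \<phi>\<Omega>"
    and p: "periodic_fn \<phi>" and v1: "vanish_inf \<phi>\<theta>" and v2: "vanish_inf \<phi>\<Omega>"
    using assms unfolding C10_with_def C1_with_def by auto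
  have pp: "periodic_fn \<phi>\<theta> \<and> periodic_fn \<phi>\<Omega>" by (rule periodic_partials[OF d p])
  obtain B1 where B1: "\<And>x. \<bar>\<phi>\<theta> x\<bar> \<le> B1" using bounded_periodic[OF c1 _ v1] pp by blast
  obtain B2 where B2: "\<And>x. \<bar>\<phi>\<Omega> x\<bar> \<le> B2" using bounded_periodic[OF c2 _ v2] pp by blast
  have sq: "sqrt ((\<phi>\<theta> y)\<^sup>2 + (\<phi>\<Omega> y)\<^sup>2) \<le> B1 + B2" for y
  proof -
    have "(\<phi>\<theta> y)\<^sup>2 + (\<phi>\<Omega> y)\<^sup>2 \<le> (\<bar>\<phi>\<theta> y\<bar> + \<bar>\<phi>\<Omega> y\<bar>)\<^sup>2"
      by (simp add: power2_sum)
    then have "sqrt ((\<phi>\<theta> y)\<^sup>2 + (\<phi>\<Omega> y)\<^sup>2) \<le> sqrt ((\<bar>\<phi>\<theta> y\<bar> + \<bar>\<phi>\<Omega> y\<bar>)\<^sup>2)"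
      by (rule real_sqrt_le_mono)
    then have "sqrt ((\<phi>\<theta> y)\<^sup>2 + (\<phi>\<Omega> y)\<^sup>2) \<le> \<bar>\<phi>\<theta> y\<bar> + \<bar>\<phi>\<Omega> y\<bar>"
      by simp
    then show ?thesis using B1[of y] B2[of y] by linarith
  qed
  have "\<bar>\<phi>\<theta> x\<bar> \<le> sqrt ((\<phi>\<theta> x)\<^sup>2 + (\<phi>\<Omega> x)\<^sup>2)"
    by (metis abs_ge_zero power2_abs real_sqrt_sum_squares_ge1)
  also have "\<dots> \<le> grad_norm \<phi>\<theta> \<phi>\<Omega>" unfolding grad_norm_def
    by (rule cSUP_upper) (use sq in \<open>auto intro!: bdd_aboveI2\<close>)
  finally show ?thesis .
qed

lemma not_bot_Ici: "t \<ge> (0::real) \<Longrightarrow> at t within {0..} \<noteq> bot"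
proof
  assume t: "t \<ge> 0" and b: "at t within {0..} = bot"
  have "at_right t \<le> at t within {0..}" by (rule at_le) (use t in auto)
  then have "at_right t = bot" using b by (simp add: bot_unique)
  then show False using trivial_limit_at_right_real by blast
qed

lemma DERIV_unique_Ici:
  assumes "t \<ge> (0::real)" "(f has_real_derivative a) (at t within {0..})" "(f has_real_derivative b) (at t within {0..})"
  shows "a = b"
  using vector_derivative_unique_within[OF not_bot_Ici[OF assms(1)]] assms(2,3)
  by (simp add: has_real_derivative_iff_has_vector_derivative)

lemma test_fn_D:
  assumes "test_fn T \<phi> \<phi>t \<phi>\<theta> \<phi>\<Omega>"
  shows "\<And>p. p \<in> {0..} \<times> UNIV \<Longrightarrow> ((\<lambda>(s,y). \<phi> s y) has_derivative
    (\<lambda>(c,a,b). \<phi>t (fst p) (snd p) * c + \<phi>\<theta> (fst p) (snd p) * a + \<phi>\<Omega> (fst p) (snd p) * b)) (at p within {0..} \<times> UNIV)"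
  using assms unfolding test_fn_def by auto

lemma test_fn_chain:
  assumes "test_fn T \<phi> \<phi>t \<phi>\<theta> \<phi>\<Omega>" "t \<in> S" "S \<subseteq> {0..}"
    "(th has_real_derivative v) (at t within S)"
  shows "((\<lambda>s. \<phi> s (th s, w)) has_real_derivative (\<phi>t t (th t, w) + \<phi>\<theta> t (th t, w) * v)) (at t within S)"
proof -
  have f: "((\<lambda>s. (s, (th s, w))) has_derivative (\<lambda>c. (c, (c * v, 0)))) (at t within S)"
    using assms(4) unfolding has_field_derivative_def
    by (auto intro!: derivative_eq_intros simp: mult.commute)
  have "((\<lambda>s. (\<lambda>(s,y). \<phi> s y) (s, (th s, w))) has_derivative
     (\<lambda>c. (\<lambda>(c,a,b). \<phi>t (fst (t, (th t, w))) (snd (t, (th t, w))) * c + \<phi>\<theta> (fst (t, (th t, w))) (snd (t, (th t, w))) * a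
        + \<phi>\<Omega> (fst (t, (th t, w))) (snd (t, (th t, w))) * b) (c, (c * v, 0)))) (at t within S)"
    by (rule has_derivative_in_compose2[OF test_fn_D[OF assms(1)] _ assms(2) f]) (use assms(3) in auto)
  then have d: "((\<lambda>s. \<phi> s (th s, w)) has_derivative (\<lambda>c. \<phi>t t (th t, w) * c + \<phi>\<theta> t (th t, w) * (c * v) + \<phi>\<Omega> t (th t,w) * 0)) (at t within S)"
    by simp
  show ?thesis unfolding has_field_derivative_def
    by (rule has_derivative_eq_rhs[OF d]) (auto simp: fun_eq_iff algebra_simps)
qed

lemma test_fn_space:
  assumes "test_fn T \<phi> \<phi>t \<phi>\<theta> \<phi>\<Omega>" "t \<ge> 0"
  shows "(\<phi> t has_derivative (\<lambda>(a,b). \<phi>\<theta> t y*a + \<phi>\<Omega> t y*b)) (at y)"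
proof -
  have f: "((\<lambda>y. (t, y)) has_derivative (\<lambda>v. (0, v))) (at y within UNIV)"
    by (auto intro!: derivative_eq_intros)
  have "((\<lambda>y. (\<lambda>(s,y). \<phi> s y) (t, y)) has_derivative
     (\<lambda>v. (\<lambda>(c,a,b). \<phi>t (fst (t, y)) (snd (t, y)) * c + \<phi>\<theta> (fst (t, y)) (snd (t, y)) * a
        + \<phi>\<Omega> (fst (t, y)) (snd (t, y)) * b) (0, v))) (at y within UNIV)"
    by (rule has_derivative_in_compose2[OF test_fn_D[OF assms(1)] _ _ f]) (use assms(2) in auto)
  moreover have "(\<lambda>v. (\<lambda>(c,a,b). \<phi>t (fst (t, y)) (snd (t, y)) * c + \<phi>\<theta> (fst (t, y)) (snd (t, y)) * a
        + \<phi>\<Omega> (fst (t, y)) (snd (t, y)) * b) (0::real, v)) = (\<lambda>(a,b). \<phi>\<theta> t y*a + \<phi>\<Omega> t y*b)"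
    by (auto simp: fun_eq_iff)
  ultimately show ?thesis by simp
qed

lemma test_fn_periodic:
  assumes "test_fn T \<phi> \<phi>t \<phi>\<theta> \<phi>\<Omega>" "t \<ge> 0"
  shows "periodic_fn (\<phi> t)" "periodic_fn (\<phi>\<theta> t)" "periodic_fn (\<phi>t t)"
proof -
  show p: "periodic_fn (\<phi> t)" using assms(1) unfolding test_fn_def periodic_fn_def by auto
  show "periodic_fn (\<phi>\<theta> t)"
    using periodic_partials[OF test_fn_space[OF assms] p] by blast
  show "periodic_fn (\<phi>t t)" unfolding periodic_fn_def
  proof (intro allI)
    fix \<theta> \<Omega> :: real
    have c: "((\<lambda>s. \<theta>') has_real_derivative 0) (at t within {0..})" for \<theta>'
      by (rule DERIV_const)
    have a: "((\<lambda>s. \<phi> s (\<theta>, \<Omega>)) has_real_derivative (\<phi>t t (\<theta>, \<Omega>) + \<phi>\<theta> t (\<theta>, \<Omega>) * 0)) (at t within {0..})"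
      using test_fn_chain[OF assms(1) _ _ c[of \<theta>], where w=\<Omega>] assms(2) by simp
    have b: "((\<lambda>s. \<phi> s (\<theta> + 2*pi, \<Omega>)) has_real_derivative (\<phi>t t (\<theta> + 2*pi, \<Omega>) + \<phi>\<theta> t (\<theta> + 2*pi, \<Omega>) * 0)) (at t within {0..})"
      using test_fn_chain[OF assms(1) _ _ c[of "\<theta> + 2*pi"], where w=\<Omega>] assms(2) by simp
    have e: "(\<lambda>s. \<phi> s (\<theta> + 2*pi, \<Omega>)) = (\<lambda>s. \<phi> s (\<theta>, \<Omega>))"
      using assms(1) unfolding test_fn_def by auto
    show "\<phi>t t (\<theta> + 2*pi, \<Omega>) = \<phi>t t (\<theta>, \<Omega>)"
      using DERIV_unique_Ici[OF assms(2) a] b e by simp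
  qed
qed

lemma C1_chain:
  assumes "\<And>x. (\<phi> has_derivative (\<lambda>(a,b). P x*a + Q x*b)) (at x)"
    "(th has_real_derivative v) (at t within S)"
  shows "((\<lambda>s. \<phi> (th s, w)) has_real_derivative (P (th t, w) * v)) (at t within S)"
proof -
  have f: "((\<lambda>s. (th s, w)) has_derivative (\<lambda>c. (c * v, 0))) (at t within S)"
    using assms(2) unfolding has_field_derivative_def
    by (auto intro!: derivative_eq_intros simp: mult.commute)
  have "((\<lambda>s. \<phi> (th s, w)) has_derivative (\<lambda>c. (\<lambda>(a,b). P (th t, w)*a + Q (th t, w)*b) (c * v, 0))) (at t within S)"
  proof -
    have g: "(\<phi> has_derivative (\<lambda>(a,b). P (th t, w)*a + Q (th t, w)*b)) (at (th t, w) within (\<lambda>s. (th s, w)) ` S)"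
      using assms(1) has_derivative_at_withinI by blast
    show ?thesis using diff_chain_within[OF f g] by (simp add: o_def)
  qed
  note d = this
  show ?thesis unfolding has_field_derivative_def
    by (rule has_derivative_eq_rhs[OF d]) (auto simp: fun_eq_iff algebra_simps)
qed


lemma lipschitz_abs_cont:
  assumes L: "L \<ge> 0" and lip: "\<And>a b. 0 \<le> a \<Longrightarrow> a \<le> b \<Longrightarrow> b \<le> T \<Longrightarrow> \<bar>F b - F a\<bar> \<le> L * (b - a)"
  shows "abs_cont_on 0 T F"
  unfolding abs_cont_on_def
proof (intro allI impI)
  fix \<epsilon> :: real assume e: "\<epsilon> > 0"
  show "\<exists>\<delta>>0. \<forall>(n::nat) s u. (\<forall>k<n. 0 \<le> s k \<and> s k \<le> u k \<and> u k \<le> T) \<and>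
        (\<forall>k<n. \<forall>l<n. k \<noteq> l \<longrightarrow> u k \<le> s l \<or> u l \<le> s k) \<and>
        (\<Sum>k<n. u k - s k) < \<delta> \<longrightarrow> (\<Sum>k<n. \<bar>F (u k) - F (s k)\<bar>) < \<epsilon>"
  proof (intro exI[of _ "\<epsilon> / (L + 1)"] conjI allI impI)
    show "\<epsilon> / (L + 1) > 0" using e L by simp
    fix n :: nat and s u :: "nat \<Rightarrow> real"
    assume h: "(\<forall>k<n. 0 \<le> s k \<and> s k \<le> u k \<and> u k \<le> T) \<and>
        (\<forall>k<n. \<forall>l<n. k \<noteq> l \<longrightarrow> u k \<le> s l \<or> u l \<le> s k) \<and> (\<Sum>k<n. u k - s k) < \<epsilon> / (L + 1)"
    have "(\<Sum>k<n. \<bar>F (u k) - F (s k)\<bar>) \<le> (\<Sum>k<n. L * (u k - s k))"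
      by (rule sum_mono) (use h lip in auto)
    also have "\<dots> = L * (\<Sum>k<n. u k - s k)" by (simp add: sum_distrib_left)
    also have "\<dots> \<le> L * (\<epsilon> / (L + 1))" using h L by (intro mult_left_mono) auto
    also have "\<dots> < \<epsilon>" using L e by (simp add: field_simps)
    finally show "(\<Sum>k<n. \<bar>F (u k) - F (s k)\<bar>) < \<epsilon>" .
  qed
qed

lemma sum_bound_lemma:
  fixes a b A B :: "nat \<Rightarrow> real"
  assumes "\<And>i. i < N \<Longrightarrow> \<bar>a i\<bar> \<le> A i" "\<And>i. i < N \<Longrightarrow> \<bar>b i\<bar> \<le> B i"
  shows "\<bar>(\<Sum>i<N. a i * b i) / real N\<bar> \<le> (\<Sum>i<N. A i * B i) / real N"
proof -
  have "\<bar>\<Sum>i<N. a i * b i\<bar> \<le> (\<Sum>i<N. \<bar>a i * b i\<bar>)" by (rule sum_abs)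
  also have "\<dots> \<le> (\<Sum>i<N. A i * B i)"
  proof (rule sum_mono)
    fix i assume "i \<in> {..<N}"
    then have "\<bar>a i\<bar> \<le> A i" "\<bar>b i\<bar> \<le> B i" using assms by auto
    then show "\<bar>a i * b i\<bar> \<le> A i * B i" unfolding abs_mult
      by (intro mult_mono) auto
  qed
  finally show ?thesis by (simp add: divide_right_mono)
qed

definition Vf :: "real \<Rightarrow> real \<Rightarrow> nat \<Rightarrow> (nat \<Rightarrow> real) \<Rightarrow> (real \<Rightarrow> nat \<Rightarrow> real) \<Rightarrow> nat \<Rightarrow> real \<Rightarrow> real" where
  "Vf \<alpha> K N \<Omega> \<Theta> i t = \<Omega> i + K / real N * (\<Sum>j<N. hker \<alpha> (\<Theta> t j - \<Theta> t i))"

declare hker_meas[measurable] ang_rep_meas[measurable]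

locale kur =
  fixes \<alpha> K :: real and N :: nat and \<Omega> :: "nat \<Rightarrow> real" and \<Theta> :: "real \<Rightarrow> nat \<Rightarrow> real"
  assumes al0: "0 < \<alpha>" and al1: "\<alpha> < 1/2" and K0: "0 < K" and N0: "0 < N"
    and dTh0: "\<forall>i<N. \<forall>t\<ge>0. ((\<lambda>s. \<Theta> s i) has_real_derivative
            (\<Omega> i + K / real N * (\<Sum>j<N. hker \<alpha> (\<Theta> t j - \<Theta> t i)))) (at t within {0..})"

begin

abbreviation "V \<equiv> Vf \<alpha> K N \<Omega> \<Theta>"

lemma dTh: "i < N \<Longrightarrow> t \<ge> 0 \<Longrightarrow> ((\<lambda>s. \<Theta> s i) has_real_derivative V i t) (at t within {0..})"
  using dTh0 unfolding Vf_def by blast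

lemma contTh: "i < N \<Longrightarrow> continuous_on {0..} (\<lambda>s. \<Theta> s i)"
  unfolding continuous_on_eq_continuous_within using dTh DERIV_continuous by fastforce

lemma Vbound: "\<bar>V i t\<bar> \<le> \<bar>\<Omega> i\<bar> + K * hnorm \<alpha>"
proof -
  have "\<bar>\<Sum>j<N. hker \<alpha> (\<Theta> t j - \<Theta> t i)\<bar> \<le> (\<Sum>j<N. hnorm \<alpha>)"
    using sum_abs[of "\<lambda>j. hker \<alpha> (\<Theta> t j - \<Theta> t i)" "{..<N}"] hnorm_ge[OF al0 al1]
    by (meson order_trans sum_mono)
  then have "\<bar>K / real N * (\<Sum>j<N. hker \<alpha> (\<Theta> t j - \<Theta> t i))\<bar> \<le> K / real N * (real N * hnorm \<alpha>)"
    using K0 N0 by (simp add: abs_mult mult_left_mono del: times_divide_eq_left times_divide_eq_right)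
  also have "\<dots> = K * hnorm \<alpha>" using N0 by simp
  finally show ?thesis unfolding Vf_def by linarith
qed

lemma intmu: "f \<in> borel_measurable borel \<Longrightarrow>
  (\<integral>x. f x \<partial>empirical N (\<Theta> t) \<Omega>) = (\<Sum>i<N. f (ang_rep (\<Theta> t i), \<Omega> i)) / real N"
  using integral_empirical[OF N0] by blast

lemma intper: "f \<in> borel_measurable borel \<Longrightarrow> periodic_fn f \<Longrightarrow>
  (\<integral>x. f x \<partial>empirical N (\<Theta> t) \<Omega>) = (\<Sum>i<N. f (\<Theta> t i, \<Omega> i)) / real N"
proof -
  assume m: "f \<in> borel_measurable borel" and p: "periodic_fn f"
  have "f (ang_rep (\<Theta> t i), \<Omega> i) = f (\<Theta> t i, \<Omega> i)" for i
    by (rule periodic_ang_rep) (use p in \<open>simp add: periodic_fn_def\<close>)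
  then show ?thesis using intmu[OF m] by simp
qed

lemma part_TM: "T_M (\<lambda>t. empirical N (\<Theta> t) \<Omega>)"
  unfolding T_M_def
proof (intro allI impI)
  fix \<epsilon> :: real assume e: "\<epsilon> > 0"
  define R where "R = (\<Sum>i<N. \<bar>\<Omega> i\<bar>)"
  define C where "C = {-pi..pi} \<times> {-R..R}"
  have cC: "compact C" unfolding C_def by (intro compact_Times) auto
  have sC: "UNIV - C \<in> sets borel"
    using cC by (metis borel_closed compact_imp_closed sets.compl_sets space_borel)
  have "measure (empirical N (\<Theta> t) \<Omega>) (UNIV - C) = 0" for t
  proof (rule emp_null_measure[OF sC])
    fix i assume i: "i < N"
    have "\<bar>\<Omega> i\<bar> \<le> R" unfolding R_def using i by (intro member_le_sum) auto
    then show "(ang_rep (\<Theta> t i), \<Omega> i) \<notin> UNIV - C"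
      unfolding C_def using ang_rep_range[of "\<Theta> t i"] by auto
  qed
  then show "\<exists>C. compact C \<and> (\<forall>t\<ge>0. measure (empirical N (\<Theta> t) \<Omega>) (UNIV - C) \<le> \<epsilon>)"
    using cC e by (intro exI[of _ C]) auto
qed


lemma cont_from_deriv:
  assumes "\<And>x. (\<phi> has_derivative (\<lambda>(a,b). P x*a + Q x*b)) (at x)"
  shows "continuous_on UNIV \<phi>"
  using assms has_derivative_continuous continuous_at_imp_continuous_on by blast

lemma part4:
  assumes c: "C10_with \<phi> \<phi>\<theta> \<phi>\<Omega>" and t: "t \<ge> 0"
  shows "\<exists>D. ((\<lambda>s. \<integral>x. \<phi> x \<partial>empirical N (\<Theta> s) \<Omega>) has_real_derivative D) (at t within {0..}) \<and>
          \<bar>D\<bar> \<le> ((\<Sum>i<N. \<bar>\<Omega> i\<bar>) / real N + K * hnorm \<alpha>) * grad_norm \<phi>\<theta> \<phi>\<Omega>"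
proof -
  have d: "\<And>x. (\<phi> has_derivative (\<lambda>(a,b). \<phi>\<theta> x*a + \<phi>\<Omega> x*b)) (at x)" and p: "periodic_fn \<phi>"
    using c unfolding C10_with_def C1_with_def by auto
  have m: "\<phi> \<in> borel_measurable borel"
    using cont_from_deriv[OF d] by (rule borel_measurable_continuous_onI)
  have G: "(\<lambda>s. \<integral>x. \<phi> x \<partial>empirical N (\<Theta> s) \<Omega>) = (\<lambda>s. (\<Sum>i<N. \<phi> (\<Theta> s i, \<Omega> i)) / real N)"
    by (rule ext) (rule intper[OF m p])
  define D where "D = (\<Sum>i<N. \<phi>\<theta> (\<Theta> t i, \<Omega> i) * V i t) / real N"
  have "((\<lambda>s. (\<Sum>i<N. \<phi> (\<Theta> s i, \<Omega> i)) / real N) has_real_derivative D) (at t within {0..})"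
    unfolding D_def
    by (intro DERIV_cdivide DERIV_sum C1_chain[OF d] dTh t) auto
  moreover have "\<bar>D\<bar> \<le> ((\<Sum>i<N. \<bar>\<Omega> i\<bar>) / real N + K * hnorm \<alpha>) * grad_norm \<phi>\<theta> \<phi>\<Omega>"
  proof -
    have "\<bar>D\<bar> \<le> (\<Sum>i<N. grad_norm \<phi>\<theta> \<phi>\<Omega> * (\<bar>\<Omega> i\<bar> + K * hnorm \<alpha>)) / real N"
      unfolding D_def by (rule sum_bound_lemma) (auto intro: grad_bound[OF c] Vbound)
    also have "\<dots> = ((\<Sum>i<N. \<bar>\<Omega> i\<bar>) / real N + K * hnorm \<alpha>) * grad_norm \<phi>\<theta> \<phi>\<Omega>"
      using N0 by (simp add: sum_distrib_left[symmetric] sum.distrib field_simps)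
    finally show ?thesis .
  qed
  ultimately show ?thesis unfolding G by (intro exI[of _ D] conjI)
qed

lemma part_AC: "AC_M (\<lambda>t. empirical N (\<Theta> t) \<Omega>)"
  unfolding AC_M_def
proof (intro conjI allI impI)
  show "bounded_mvalued (\<lambda>t. empirical N (\<Theta> t) \<Omega>)" by (rule emp_bounded[OF N0])
  fix \<phi> and T :: real assume cc: "Cc_inf \<phi>" and T: "T \<ge> 0"
  have "smooth2 \<phi>" and p: "periodic_fn \<phi>" using cc unfolding Cc_inf_def by auto
  then obtain P Q where d: "\<And>x. (\<phi> has_derivative (\<lambda>(a,b). P x*a + Q x*b)) (at x)" and sP: "smooth2 P"
    by (cases rule: smooth2.cases) blast
  obtain P1 Q1 where dP: "\<And>x. (P has_derivative (\<lambda>(a,b). P1 x*a + Q1 x*b)) (at x)"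
    using sP by (cases rule: smooth2.cases) blast
  have cP: "continuous_on UNIV P" by (rule cont_from_deriv[OF dP])
  have m: "\<phi> \<in> borel_measurable borel"
    using cont_from_deriv[OF d] by (rule borel_measurable_continuous_onI)
  define G where "G = (\<lambda>s. (\<Sum>i<N. \<phi> (\<Theta> s i, \<Omega> i)) / real N)"
  have G: "(\<lambda>s. \<integral>x. \<phi> x \<partial>empirical N (\<Theta> s) \<Omega>) = G"
    unfolding G_def by (rule ext) (rule intper[OF m p])
  have cS: "continuous_on {0..T} (\<lambda>s. \<Sum>i<N. \<bar>P (\<Theta> s i, \<Omega> i)\<bar>)"
  proof (intro continuous_intros)
    fix i assume "i \<in> {..<N}"
    then have "continuous_on {0..T} (\<lambda>s. \<Theta> s i)" by (intro continuous_on_subset[OF contTh]) auto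
    then have "continuous_on {0..T} (\<lambda>s. (\<Theta> s i, \<Omega> i))" by (intro continuous_intros)
    then show "continuous_on {0..T} (\<lambda>s. P (\<Theta> s i, \<Omega> i))"
      using continuous_on_compose2[OF cP] by blast
  qed
  then have "compact ((\<lambda>s. \<Sum>i<N. \<bar>P (\<Theta> s i, \<Omega> i)\<bar>) ` {0..T})"
    by (intro compact_continuous_image) auto
  then have "bounded ((\<lambda>s. \<Sum>i<N. \<bar>P (\<Theta> s i, \<Omega> i)\<bar>) ` {0..T})" by (rule compact_imp_bounded)
  then obtain B where "\<forall>y \<in> (\<lambda>s. \<Sum>i<N. \<bar>P (\<Theta> s i, \<Omega> i)\<bar>) ` {0..T}. norm y \<le> B"
    unfolding bounded_iff by blast
  then have B: "\<And>s. s \<in> {0..T} \<Longrightarrow> \<bar>\<Sum>i<N. \<bar>P (\<Theta> s i, \<Omega> i)\<bar>\<bar> \<le> B" by simp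
  have Pb: "\<bar>P (\<Theta> s i, \<Omega> i)\<bar> \<le> B" if "s \<in> {0..T}" "i < N" for s i
  proof -
    have "\<bar>P (\<Theta> s i, \<Omega> i)\<bar> \<le> (\<Sum>i<N. \<bar>P (\<Theta> s i, \<Omega> i)\<bar>)"
      using that by (intro member_le_sum) auto
    then show ?thesis using B[OF that(1)] by linarith
  qed
  define L where "L = (\<Sum>i<N. B * (\<bar>\<Omega> i\<bar> + K * hnorm \<alpha>)) / real N"
  have L0: "L \<ge> 0"
  proof -
    have "0 \<le> \<bar>P (\<Theta> 0 0, \<Omega> 0)\<bar>" by simp
    have hn: "0 \<le> hnorm \<alpha>" using hnorm_ge[OF al0 al1, of 0] by linarith
    have "\<bar>\<Sum>i<N. \<bar>P (\<Theta> 0 i, \<Omega> i)\<bar>\<bar> \<le> B" using B[of 0] T by simp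
    then have "B \<ge> 0" by (meson abs_ge_zero order_trans)
    then show ?thesis unfolding L_def using hn K0 by (intro divide_nonneg_nonneg sum_nonneg mult_nonneg_nonneg) auto
  qed
  have der: "(G has_real_derivative (\<Sum>i<N. P (\<Theta> s i, \<Omega> i) * V i s) / real N) (at s within {0..T})"
    if s: "s \<in> {0..T}" for s
    unfolding G_def
  proof (intro DERIV_cdivide DERIV_sum C1_chain[OF d])
    fix i assume "i \<in> {..<N}"
    then show "((\<lambda>s. \<Theta> s i) has_real_derivative V i s) (at s within {0..T})"
    proof -
      have "((\<lambda>s. \<Theta> s i) has_real_derivative V i s) (at s within {0..})"
        using dTh \<open>i \<in> {..<N}\<close> s by simp
      then show ?thesis by (rule DERIV_subset) auto
    qed
  qed
  have nb: "norm (G b - G a) \<le> L * norm (b - a)" if "a \<in> {0..T}" "b \<in> {0..T}" for a b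
  proof (rule field_differentiable_bound[OF _ der _ that(2,1)])
    fix z :: real assume z: "z \<in> {0..T}"
    show "norm ((\<Sum>i<N. P (\<Theta> z i, \<Omega> i) * V i z) / real N) \<le> L"
      unfolding L_def real_norm_def by (rule sum_bound_lemma) (use z in \<open>auto intro: Pb Vbound\<close>)
  qed (auto simp: convex_real_interval)
  have lip: "\<bar>G b - G a\<bar> \<le> L * (b - a)" if "0 \<le> a" "a \<le> b" "b \<le> T" for a b
  proof -
    have "norm (G b - G a) \<le> L * norm (b - a)" using that by (intro nb) auto
    then show ?thesis using that by simp
  qed
  have "abs_cont_on 0 T G"
    by (rule lipschitz_abs_cont[OF L0 lip])
  then show "abs_cont_on 0 T (\<lambda>t. \<integral>x. \<phi> x \<partial>empirical N (\<Theta> t) \<Omega>)" unfolding G .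
qed

end


context kur begin
lemma Pfield_emp:
  "Pfield \<alpha> K (empirical N (\<Theta> s) \<Omega>) = (\<lambda>x. snd x - K * ((\<Sum>j<N. hker \<alpha> (fst x - ang_rep (\<Theta> s j))) / real N))"
proof (rule ext)
  fix x :: "real \<times> real"
  have "(\<integral>y. hker \<alpha> (fst x - fst y) \<partial>empirical N (\<Theta> s) \<Omega>) = (\<Sum>j<N. hker \<alpha> (fst x - ang_rep (\<Theta> s j))) / real N"
  proof -
    have "(\<lambda>y::real\<times>real. fst x - fst y) \<in> borel_measurable borel"
      by (intro borel_measurable_continuous_onI continuous_intros)
    then have hm: "(\<lambda>y::real\<times>real. hker \<alpha> (fst x - fst y)) \<in> borel_measurable borel"
      using measurable_compose[of "\<lambda>y. fst x - fst y" borel borel "hker \<alpha>" borel] hker_meas by blast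
    show ?thesis using intmu[OF hm, of s] by simp
  qed
  then show "Pfield \<alpha> K (empirical N (\<Theta> s) \<Omega>) x = snd x - K * ((\<Sum>j<N. hker \<alpha> (fst x - ang_rep (\<Theta> s j))) / real N)"
    unfolding Pfield_def by simp
qed

lemma Pfield_at: "i < N \<Longrightarrow> Pfield \<alpha> K (empirical N (\<Theta> s) \<Omega>) (ang_rep (\<Theta> s i), \<Omega> i) = V i s"
proof -
  have "hker \<alpha> (ang_rep (\<Theta> s i) - ang_rep (\<Theta> s j)) = - hker \<alpha> (\<Theta> s j - \<Theta> s i)" for j
    using hker_reps[of \<alpha> "\<Theta> s i" "\<Theta> s j"] hker_odd[of \<alpha> "\<Theta> s j - \<Theta> s i"] by simp
  then have "(\<Sum>j<N. hker \<alpha> (ang_rep (\<Theta> s i) - ang_rep (\<Theta> s j))) = - (\<Sum>j<N. hker \<alpha> (\<Theta> s j - \<Theta> s i))"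
    by (simp add: sum_negf)
  then show ?thesis unfolding Pfield_emp Vf_def by simp
qed

lemma contTh_comp:
  assumes "continuous_on S c" "c ` S \<subseteq> {0..}" "i < N"
  shows "continuous_on S (\<lambda>s. \<Theta> (c s) i)"
  using continuous_on_compose2[OF contTh[OF assms(3)] assms(1,2)] .

lemma cont_tx:
  assumes "continuous_on ({0..} \<times> UNIV) (\<lambda>(t,x). F t x)" "continuous_on S c" "c ` S \<subseteq> {0..}"
    "continuous_on S y"
  shows "continuous_on S (\<lambda>s. F (c s) (y s))"
proof -
  have "continuous_on S (\<lambda>s. (c s, y s))" by (intro continuous_intros assms)
  moreover have "(\<lambda>s. (c s, y s)) ` S \<subseteq> {0..} \<times> UNIV" using assms(3) by auto
  ultimately have "continuous_on S (\<lambda>s. (\<lambda>(t,x). F t x) (c s, y s))"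
    by (rule continuous_on_compose2[OF assms(1)])
  then show ?thesis by simp
qed

lemma part_weak:
  assumes T: "T > 0"
  shows "weak_sol \<alpha> K T (\<lambda>t. empirical N (\<Theta> t) \<Omega>) (empirical N (\<Theta> 0) \<Omega>)"
  unfolding weak_sol_def
proof (intro conjI allI impI)
  show "bounded_mvalued (\<lambda>t. empirical N (\<Theta> t) \<Omega>)" by (rule emp_bounded[OF N0])
next
  fix \<phi> assume c0: "C0_fn \<phi>"
  then have c: "continuous_on UNIV \<phi>" and p: "periodic_fn \<phi>" unfolding C0_fn_def by auto
  have m: "\<phi> \<in> borel_measurable borel" using c by (rule borel_measurable_continuous_onI)
  have G: "(\<lambda>s. \<integral>x. \<phi> x \<partial>empirical N (\<Theta> s) \<Omega>) = (\<lambda>s. (\<Sum>i<N. \<phi> (\<Theta> s i, \<Omega> i)) / real N)"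
    by (rule ext) (rule intper[OF m p])
  show "continuous_on {0..T} (\<lambda>t. \<integral>x. \<phi> x \<partial>empirical N (\<Theta> t) \<Omega>)"
    unfolding G
  proof (intro continuous_intros)
    fix i assume "i \<in> {..<N}"
    then have "continuous_on {0..T} (\<lambda>s. \<Theta> s i)" by (intro continuous_on_subset[OF contTh]) auto
    then have "continuous_on {0..T} (\<lambda>s. (\<Theta> s i, \<Omega> i))" by (intro continuous_intros)
    then show "continuous_on {0..T} (\<lambda>s. \<phi> (\<Theta> s i, \<Omega> i))"
      using continuous_on_compose2[OF c] by blast
  qed (use N0 in auto)
next
  fix \<phi> \<phi>t \<phi>\<theta> \<phi>\<Omega> assume tf: "test_fn T \<phi> \<phi>t \<phi>\<theta> \<phi>\<Omega>"
  show "(LINT t:{0..T}|lborel. \<integral>x. \<phi>t t x \<partial>empirical N (\<Theta> t) \<Omega>)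
        + (LINT t:{0..T}|lborel. \<integral>x. Pfield \<alpha> K (empirical N (\<Theta> t) \<Omega>) x * \<phi>\<theta> t x \<partial>empirical N (\<Theta> t) \<Omega>)
        = - (\<integral>x. \<phi> 0 x \<partial>empirical N (\<Theta> 0) \<Omega>)"
  proof -
    obtain T' R where T'T: "T' < T" and van: "\<forall>t \<theta> \<Omega>. t \<ge> T' \<or> \<bar>\<Omega>\<bar> \<ge> R \<longrightarrow> \<phi> t (\<theta>, \<Omega>) = 0"
      using tf unfolding test_fn_def by blast
    have ct: "continuous_on ({0..} \<times> UNIV) (\<lambda>(t, x). \<phi>t t x)"
      and c\<theta>: "continuous_on ({0..} \<times> UNIV) (\<lambda>(t, x). \<phi>\<theta> t x)"
      using tf unfolding test_fn_def by auto
    have perp: "periodic_fn (\<phi> s)" "periodic_fn (\<phi>\<theta> s)" "periodic_fn (\<phi>t s)" if "s \<ge> 0" for s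
      using test_fn_periodic[OF tf that] by auto
    have mphi: "\<phi> s \<in> borel_measurable borel" if "s \<ge> 0" for s
    proof -
      have "continuous_on UNIV (\<phi> s)" by (rule cont_from_deriv[OF test_fn_space[OF tf that]])
      then show ?thesis by (rule borel_measurable_continuous_onI)
    qed
    have mt: "\<phi>t s \<in> borel_measurable borel" if "s \<ge> 0" for s
    proof -
      have "continuous_on UNIV (\<lambda>x. \<phi>t ((\<lambda>_. s) x) ((\<lambda>x. x) x))"
        by (rule cont_tx[OF ct]) (use that in \<open>auto intro: continuous_intros\<close>)
      then show ?thesis by (simp add: borel_measurable_continuous_onI)
    qed
    have m\<theta>: "\<phi>\<theta> s \<in> borel_measurable borel" if "s \<ge> 0" for s
    proof -
      have "continuous_on UNIV (\<lambda>x. \<phi>\<theta> ((\<lambda>_. s) x) ((\<lambda>x. x) x))"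
        by (rule cont_tx[OF c\<theta>]) (use that in \<open>auto intro: continuous_intros\<close>)
      then show ?thesis by (simp add: borel_measurable_continuous_onI)
    qed
    have hm: "(\<lambda>x::real\<times>real. hker \<alpha> (fst x - c)) \<in> borel_measurable borel" for c
    proof -
      have "(\<lambda>y::real\<times>real. fst y - c) \<in> borel_measurable borel"
        by (intro borel_measurable_continuous_onI continuous_intros)
      then show ?thesis
        using measurable_compose[of "\<lambda>y::real\<times>real. fst y - c" borel borel "hker \<alpha>" borel] hker_meas by blast
    qed
    have sm: "(\<lambda>x::real\<times>real. snd x) \<in> borel_measurable borel"
      by (intro borel_measurable_continuous_onI continuous_intros)
    define p1 where "p1 = (\<lambda>s. (\<Sum>i<N. \<phi>t s (\<Theta> s i, \<Omega> i)) / real N)"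
    define p2 where "p2 = (\<lambda>s. (\<Sum>i<N. V i s * \<phi>\<theta> s (\<Theta> s i, \<Omega> i)) / real N)"
    define G where "G = (\<lambda>s. (\<Sum>i<N. \<phi> s (\<Theta> s i, \<Omega> i)) / real N)"
    define g' where "g' = (\<lambda>s. (\<Sum>i<N. \<phi>t s (\<Theta> s i, \<Omega> i) + \<phi>\<theta> s (\<Theta> s i, \<Omega> i) * V i s) / real N)"
    have eq1: "(\<integral>x. \<phi>t s x \<partial>empirical N (\<Theta> s) \<Omega>) = p1 s" if "s \<in> {0..T}" for s
      unfolding p1_def by (rule intper[OF mt perp(3)]) (use that in auto)
    have eq2: "(\<integral>x. Pfield \<alpha> K (empirical N (\<Theta> s) \<Omega>) x * \<phi>\<theta> s x \<partial>empirical N (\<Theta> s) \<Omega>) = p2 s"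
      if "s \<in> {0..T}" for s
    proof -
      have s0: "s \<ge> 0" using that by auto
      have "(\<lambda>x. Pfield \<alpha> K (empirical N (\<Theta> s) \<Omega>) x * \<phi>\<theta> s x) \<in> borel_measurable borel"
        unfolding Pfield_emp
        by (intro borel_measurable_times borel_measurable_diff borel_measurable_sum borel_measurable_divide
              borel_measurable_const sm hm m\<theta>[OF s0])
      then have "(\<integral>x. Pfield \<alpha> K (empirical N (\<Theta> s) \<Omega>) x * \<phi>\<theta> s x \<partial>empirical N (\<Theta> s) \<Omega>)
          = (\<Sum>i<N. Pfield \<alpha> K (empirical N (\<Theta> s) \<Omega>) (ang_rep (\<Theta> s i), \<Omega> i) * \<phi>\<theta> s (ang_rep (\<Theta> s i), \<Omega> i)) / real N"
        by (rule intmu)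
      also have "\<dots> = p2 s" unfolding p2_def
      proof (intro arg_cong[where f="\<lambda>x. x / real N"] sum.cong refl)
        fix i assume "i \<in> {..<N}"
        then show "Pfield \<alpha> K (empirical N (\<Theta> s) \<Omega>) (ang_rep (\<Theta> s i), \<Omega> i) * \<phi>\<theta> s (ang_rep (\<Theta> s i), \<Omega> i)
              = V i s * \<phi>\<theta> s (\<Theta> s i, \<Omega> i)"
          using Pfield_at[of i s] periodic_ang_rep[of "\<phi>\<theta> s" "\<Theta> s i" "\<Omega> i"] perp(2)[OF s0]
          unfolding periodic_fn_def by simp
      qed
      finally show ?thesis .
    qed
    have der: "(G has_real_derivative g' s) (at s within {0..T})" if s: "s \<in> {0..T}" for s
      unfolding G_def g'_def
    proof (intro DERIV_cdivide DERIV_sum test_fn_chain[OF tf s])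
      show "{0..T} \<subseteq> {0..}" by auto
      fix i assume "i \<in> {..<N}"
      have "((\<lambda>s. \<Theta> s i) has_real_derivative V i s) (at s within {0..})"
        using dTh \<open>i \<in> {..<N}\<close> s by simp
      then show "((\<lambda>s. \<Theta> s i) has_real_derivative V i s) (at s within {0..T})"
        by (rule DERIV_subset) auto
    qed
    have ftc: "(g' has_integral (G T - G 0)) {0..T}"
      by (rule fundamental_theorem_of_calculus)
         (use T der in \<open>auto simp: has_real_derivative_iff_has_vector_derivative[symmetric]\<close>)
    have GT: "G T = 0" unfolding G_def using van T'T by simp
    have G0: "G 0 = (\<integral>x. \<phi> 0 x \<partial>empirical N (\<Theta> 0) \<Omega>)"
      unfolding G_def by (rule intper[OF mphi perp(1), symmetric]) auto
    have cThT: "continuous_on {0..T} (\<lambda>s. \<Theta> s i)" if "i < N" for i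
      by (intro continuous_on_subset[OF contTh[OF that]]) auto
    have cp1: "continuous_on {0..T} p1" unfolding p1_def
    proof (intro continuous_intros)
      fix i assume "i \<in> {..<N}"
      then show "continuous_on {0..T} (\<lambda>s. \<phi>t s (\<Theta> s i, \<Omega> i))"
        by (intro cont_tx[OF ct] continuous_intros cThT) auto
    qed (use N0 in auto)
    have si1: "set_integrable lborel {0..T} p1"
      unfolding set_integrable_def by (rule borel_integrable_compact[OF compact_Icc cp1])
    define cl where "cl = (\<lambda>s::real. max 0 (min T s))"
    have ccl: "continuous_on UNIV cl" unfolding cl_def by (intro continuous_intros)
    have clS: "cl ` UNIV \<subseteq> {0..}" unfolding cl_def by auto
    have clid: "cl s = s" if "s \<in> {0..T}" for s using that unfolding cl_def by auto
    have p2m: "(\<lambda>s. p2 (cl s)) \<in> borel_measurable borel"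
      unfolding p2_def Vf_def
    proof (intro borel_measurable_times borel_measurable_add borel_measurable_sum borel_measurable_divide
              borel_measurable_const)
      fix i j assume i: "i \<in> {..<N}" and j: "j \<in> {..<N}"
      have "continuous_on UNIV (\<lambda>s. \<Theta> (cl s) j - \<Theta> (cl s) i)"
        using contTh_comp[OF ccl clS] i j by (intro continuous_intros) auto
      then have "(\<lambda>s. \<Theta> (cl s) j - \<Theta> (cl s) i) \<in> borel_measurable borel"
        by (rule borel_measurable_continuous_onI)
      then show "(\<lambda>s. hker \<alpha> (\<Theta> (cl s) j - \<Theta> (cl s) i)) \<in> borel_measurable borel"
        using measurable_compose[of "\<lambda>s. \<Theta> (cl s) j - \<Theta> (cl s) i" borel borel "hker \<alpha>" borel] hker_meas by blast
    next
      fix i assume i: "i \<in> {..<N}"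
      have "continuous_on UNIV (\<lambda>s. \<phi>\<theta> (cl s) (\<Theta> (cl s) i, \<Omega> i))"
        using contTh_comp[OF ccl clS] i by (intro cont_tx[OF c\<theta> ccl clS] continuous_intros) auto
      then show "(\<lambda>s. \<phi>\<theta> (cl s) (\<Theta> (cl s) i, \<Omega> i)) \<in> borel_measurable borel"
        by (rule borel_measurable_continuous_onI)
    qed
    have sbm: "set_borel_measurable lborel {0..T} p2"
    proof -
      have "(\<lambda>x. indicator {0..T} x *\<^sub>R p2 x) = (\<lambda>x. indicator {0..T} x *\<^sub>R p2 (cl x))"
        using clid by (auto simp: fun_eq_iff indicator_def)
      moreover have "(\<lambda>x. indicator {0..T} x *\<^sub>R p2 (cl x)) \<in> borel_measurable borel"
        using p2m by (intro borel_measurable_scaleR borel_measurable_indicator) auto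
      ultimately show ?thesis unfolding set_borel_measurable_def by simp
    qed
    have cS: "continuous_on {0..T} (\<lambda>s. \<Sum>i<N. \<bar>\<phi>\<theta> s (\<Theta> s i, \<Omega> i)\<bar>)"
    proof (intro continuous_intros)
      fix i assume "i \<in> {..<N}"
      then show "continuous_on {0..T} (\<lambda>s. \<phi>\<theta> s (\<Theta> s i, \<Omega> i))"
        by (intro cont_tx[OF c\<theta>] continuous_intros cThT) auto
    qed
    then have "compact ((\<lambda>s. \<Sum>i<N. \<bar>\<phi>\<theta> s (\<Theta> s i, \<Omega> i)\<bar>) ` {0..T})"
      by (intro compact_continuous_image) auto
    then have "bounded ((\<lambda>s. \<Sum>i<N. \<bar>\<phi>\<theta> s (\<Theta> s i, \<Omega> i)\<bar>) ` {0..T})" by (rule compact_imp_bounded)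
    then obtain B where "\<forall>y \<in> (\<lambda>s. \<Sum>i<N. \<bar>\<phi>\<theta> s (\<Theta> s i, \<Omega> i)\<bar>) ` {0..T}. norm y \<le> B"
      unfolding bounded_iff by blast
    then have B: "\<And>s. s \<in> {0..T} \<Longrightarrow> \<bar>\<Sum>i<N. \<bar>\<phi>\<theta> s (\<Theta> s i, \<Omega> i)\<bar>\<bar> \<le> B" by simp
    have Pb: "\<bar>\<phi>\<theta> s (\<Theta> s i, \<Omega> i)\<bar> \<le> B" if "s \<in> {0..T}" "i < N" for s i
    proof -
      have "\<bar>\<phi>\<theta> s (\<Theta> s i, \<Omega> i)\<bar> \<le> (\<Sum>i<N. \<bar>\<phi>\<theta> s (\<Theta> s i, \<Omega> i)\<bar>)"
        using that by (intro member_le_sum) auto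
      then show ?thesis using B[OF that(1)] by linarith
    qed
    define C where "C = (\<Sum>i<N. (\<bar>\<Omega> i\<bar> + K * hnorm \<alpha>) * B) / real N"
    have p2b: "\<bar>p2 s\<bar> \<le> C" if "s \<in> {0..T}" for s
      unfolding p2_def C_def by (rule sum_bound_lemma) (use that in \<open>auto intro: Pb Vbound\<close>)
    have siC: "set_integrable lborel {0..T} (\<lambda>_. C)"
      unfolding set_integrable_def by (rule borel_integrable_compact[OF compact_Icc continuous_on_const])
    have si2: "set_integrable lborel {0..T} p2"
      by (rule set_integrable_bound[OF siC sbm]) (auto intro!: AE_I2 order_trans[OF p2b])
    have "(LINT t:{0..T}|lborel. \<integral>x. \<phi>t t x \<partial>empirical N (\<Theta> t) \<Omega>) = (LINT t:{0..T}|lborel. p1 t)"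
      by (rule set_lebesgue_integral_cong) (auto simp: eq1)
    moreover have "(LINT t:{0..T}|lborel. \<integral>x. Pfield \<alpha> K (empirical N (\<Theta> t) \<Omega>) x * \<phi>\<theta> t x \<partial>empirical N (\<Theta> t) \<Omega>)
        = (LINT t:{0..T}|lborel. p2 t)"
      by (rule set_lebesgue_integral_cong) (auto simp: eq2)
    moreover have "(LINT t:{0..T}|lborel. p1 t) + (LINT t:{0..T}|lborel. p2 t) = (LINT t:{0..T}|lborel. p1 t + p2 t)"
      by (rule set_integral_add(2)[OF si1 si2, symmetric])
    moreover have "\<dots> = integral {0..T} (\<lambda>t. p1 t + p2 t)"
      by (rule set_borel_integral_eq_integral(2)[OF set_integral_add(1)[OF si1 si2]])
    moreover have "\<dots> = integral {0..T} g'"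
    proof (rule integral_cong)
      fix s assume "s \<in> {0..T}"
      show "p1 s + p2 s = g' s" unfolding p1_def p2_def g'_def
        by (simp add: sum.distrib add_divide_distrib mult.commute)
    qed
    moreover have "\<dots> = G T - G 0" by (rule integral_unique[OF ftc])
    ultimately show ?thesis using GT G0 by simp
  qed
qed
end

theorem mainTheorem19:
  fixes \<alpha> K :: real and N :: nat
    and \<theta>0 \<Omega> :: "nat \<Rightarrow> real" and \<Theta> :: "real \<Rightarrow> nat \<Rightarrow> real"
  assumes "0 < \<alpha>" "\<alpha> < 1/2" "0 < K" "0 < N"
    and "\<forall>i<N. \<Theta> 0 i = \<theta>0 i"
    and "\<forall>i<N. \<forall>t\<ge>0. ((\<lambda>s. \<Theta> s i) has_real_derivative
            (\<Omega> i + K / real N * (\<Sum>j<N. hker \<alpha> (\<Theta> t j - \<Theta> t i)))) (at t within {0..})"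
  defines "\<mu> \<equiv> (\<lambda>t. empirical N (\<Theta> t) \<Omega>)"
  shows "AC_M \<mu> \<and> T_M \<mu> \<and> (\<forall>T>0. weak_sol \<alpha> K T \<mu> (\<mu> 0)) \<and>
    (\<forall>\<phi> \<phi>\<theta> \<phi>\<Omega>. C10_with \<phi> \<phi>\<theta> \<phi>\<Omega> \<longrightarrow>
       (\<forall>t\<ge>0. \<exists>D. ((\<lambda>s. \<integral>x. \<phi> x \<partial>\<mu> s) has_real_derivative D) (at t within {0..}) \<and>
          \<bar>D\<bar> \<le> ((\<Sum>i<N. \<bar>\<Omega> i\<bar>) / real N + K * hnorm \<alpha>) * grad_norm \<phi>\<theta> \<phi>\<Omega>))"
proof -
  interpret kur \<alpha> K N \<Omega> \<Theta> using assms(1-4,6) by unfold_locales auto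
  have m: "\<mu> = (\<lambda>t. empirical N (\<Theta> t) \<Omega>)" by (simp add: \<mu>_def)
  show ?thesis unfolding m
    using part_AC part_TM part_weak part4 by auto
qed


end
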